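(* Let $G$ be a finite group and $H$ a proper subgroup with $[G:H]\geq 3$. Let $M$ be a simple rank $3$ $G$-invariant matroid whose ground $G$-set is $G/H$. Define a relation on $G/H - \{\bar{1}\}$ by $\bar{a} \sim \bar{b}$ if $\bar{a} = \bar{b}$ or $\{\bar{1},\bar{a},\bar{b}\}$ is dependent. Then: (1) $\sim$ is a nontrivial equivalence relation; (2) if $\bar{a} \sim \bar{b}$ and $\bar{a} \neq \bar{b}$, then $\overline{a^{-1}} \sim \overline{a^{-1}b}$; (3) for any $h \in H$ and $a,b \in G - H$, if $\bar{a} \sim \bar{b}$ then $\overline{ha} \sim \overline{hb}$; (4) the bases of $M$ are precisely the sets $\{\bar{a},\bar{b},\bar{c}\} \subseteq G/H$ with the three elements distinct and $\overline{a^{-1}b} \not\sim \overline{a^{-1}c}$.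
   Context: $G/H$ is the set of left cosets with $G$ acting by left multiplication; $\bar{a} = aH$. A matroid on a $G$-set is $G$-invariant if $gB$ is a basis for every basis $B$ and $g\in G$. A matroid is simple if every circuit has at least three elements. An equivalence relation is nontrivial if it has at least two classes. *)

theory Defs
  imports "HOL-Algebra.Left_Coset"
begin

definition matroid :: "'a set \<Rightarrow> 'a set set \<Rightarrow> bool" where
  "matroid E I \<longleftrightarrow> finite E \<and> {} \<in> I \<and> (\<forall>X\<in>I. X \<subseteq> E)
     \<and> (\<forall>X Y. X \<in> I \<and> Y \<subseteq> X \<longrightarrow> Y \<in> I)
     \<and> (\<forall>X\<in>I. \<forall>Y\<in>I. card X < card Y \<longrightarrow> (\<exists>y\<in>Y - X. insert y X \<in> I))"

definition mbasis :: "'a set \<Rightarrow> 'a set set \<Rightarrow> 'a set \<Rightarrow> bool" where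
  "mbasis E I B \<longleftrightarrow> B \<in> I \<and> (\<forall>X\<in>I. B \<subseteq> X \<longrightarrow> X = B)"

definition mdependent :: "'a set \<Rightarrow> 'a set set \<Rightarrow> 'a set \<Rightarrow> bool" where
  "mdependent E I X \<longleftrightarrow> X \<subseteq> E \<and> X \<notin> I"

definition mcircuit :: "'a set \<Rightarrow> 'a set set \<Rightarrow> 'a set \<Rightarrow> bool" where
  "mcircuit E I C \<longleftrightarrow> mdependent E I C \<and> (\<forall>D. D \<subset> C \<longrightarrow> \<not> mdependent E I D)"

definition mrank_of :: "'a set \<Rightarrow> 'a set set \<Rightarrow> 'a set \<Rightarrow> nat" where
  "mrank_of E I X = Max {card Y | Y. Y \<subseteq> X \<and> Y \<in> I}"

definition mrank :: "'a set \<Rightarrow> 'a set set \<Rightarrow> nat" where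
  "mrank E I = mrank_of E I E"

definition msimple :: "'a set \<Rightarrow> 'a set set \<Rightarrow> bool" where
  "msimple E I \<longleftrightarrow> (\<forall>C. mcircuit E I C \<longrightarrow> card C \<ge> 3)"

text \<open>G acts on G/H by left multiplication: g (aH) = (ga)H, i.e. g <# (aH).
  A matroid on G/H is G-invariant if g B is a basis for every basis B and g in G.\<close>
definition G_invariant_matroid :: "('a, 'b) monoid_scheme \<Rightarrow> 'a set \<Rightarrow> 'a set set set \<Rightarrow> bool" where
  "G_invariant_matroid G H I \<longleftrightarrow>
     (\<forall>B g. mbasis (lcosets\<^bsub>G\<^esub> H) I B \<and> g \<in> carrier G \<longrightarrow>
        mbasis (lcosets\<^bsub>G\<^esub> H) I ((\<lambda>C. g <#\<^bsub>G\<^esub> C) ` B))"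

text \<open>The relation on G/H - {1bar}: x ~ y iff x = y or {1bar, x, y} is dependent
  (1bar = H is the trivial coset).\<close>
definition coset_sim :: "('a, 'b) monoid_scheme \<Rightarrow> 'a set \<Rightarrow> 'a set set set \<Rightarrow> ('a set \<times> 'a set) set" where
  "coset_sim G H I = {(x, y). x \<in> lcosets\<^bsub>G\<^esub> H - {H} \<and> y \<in> lcosets\<^bsub>G\<^esub> H - {H} \<and>
       (x = y \<or> mdependent (lcosets\<^bsub>G\<^esub> H) I {H, x, y})}"

end

theory Submission
  imports Defs
begin

lemma dep_circuit:
  assumes "finite X" "mdependent E I X" shows "\<exists>C\<subseteq>X. mcircuit E I C"
  using assms
proof (induction "card X" arbitrary: X rule: less_induct)
  case less
  show ?case
  proof (cases "mcircuit E I X")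
    case True thus ?thesis by blast
  next
    case False
    then obtain D where D: "D \<subset> X" "mdependent E I D" using less.prems unfolding mcircuit_def by blast
    then have "card D < card X" using less.prems(1) by (simp add: psubset_card_mono)
    moreover have "finite D" using D(1) less.prems(1) by (meson finite_subset psubset_imp_subset)
    ultimately obtain C where "C \<subseteq> D" "mcircuit E I C" using less.hyps D(2) by blast
    then show ?thesis using D(1) by blast
  qed
qed

locale L = group +
  fixes H :: "'a set" and I :: "'a set set set"
  assumes subH: "subgroup H G"
    and mat: "matroid (lcosets H) I"
    and smp: "msimple (lcosets H) I"
    and rk: "mrank (lcosets H) I = 3"
    and ginv: "G_invariant_matroid G H I"
begin

lemma finE: "finite (lcosets H)" using mat unfolding matroid_def by blast
lemma emptyI: "{} \<in> I" using mat unfolding matroid_def by blast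
lemma subE: "X \<in> I \<Longrightarrow> X \<subseteq> lcosets H" using mat unfolding matroid_def by blast
lemma hered: "X \<in> I \<Longrightarrow> Y \<subseteq> X \<Longrightarrow> Y \<in> I" using mat unfolding matroid_def by blast
lemma aug: "X \<in> I \<Longrightarrow> Y \<in> I \<Longrightarrow> card X < card Y \<Longrightarrow> \<exists>y\<in>Y - X. insert y X \<in> I"
  using mat unfolding matroid_def by blast

lemma lc_eq:
  assumes a: "a \<in> carrier G" and b: "b \<in> carrier G"
  shows "(a <# H = b <# H) \<longleftrightarrow> inv a \<otimes> b \<in> H"
proof
  assume e: "a <# H = b <# H"
  have "b \<in> b <# H" by (rule lcos_self[OF b subH])
  then have "b \<in> a <# H" using e by simp
  then show "inv a \<otimes> b \<in> H" using subgroup.lcos_module_imp[OF subH is_group a] by blast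
next
  assume "inv a \<otimes> b \<in> H"
  then have "b \<in> a <# H" by (rule subgroup.lcos_module_rev[OF subH is_group a b])
  then show "a <# H = b <# H" using l_repr_independence subH a by blast
qed

lemma H_eq: "H = \<one> <# H" using lcos_mult_one[OF subgroup.subset[OF subH]] by simp

lemma lc_H: assumes a: "a \<in> carrier G" shows "(a <# H = H) \<longleftrightarrow> a \<in> H"
proof -
  have "(\<one> <# H = a <# H) \<longleftrightarrow> inv \<one> \<otimes> a \<in> H" by (rule lc_eq) (simp_all add: a)
  then show ?thesis using a H_eq by auto
qed

lemma E_iff: "x \<in> lcosets H \<longleftrightarrow> (\<exists>a\<in>carrier G. x = a <# H)"
  unfolding LCOSETS_def by blast

lemma H_in_E: "H \<in> lcosets H" using E_iff H_eq by auto

lemma lc_in_E: "a \<in> carrier G \<Longrightarrow> a <# H \<in> lcosets H" using E_iff by auto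

lemma act: "g \<in> carrier G \<Longrightarrow> a \<in> carrier G \<Longrightarrow> g <# (a <# H) = (g \<otimes> a) <# H"
  by (rule lcos_m_assoc[OF subgroup.subset[OF subH]])

lemma act_E: "g \<in> carrier G \<Longrightarrow> X \<in> lcosets H \<Longrightarrow> g <# X \<in> lcosets H"
  using E_iff act by auto

lemma act_inv: "g \<in> carrier G \<Longrightarrow> X \<in> lcosets H \<Longrightarrow> inv g <# (g <# X) = X"
  using E_iff act by (auto simp: m_assoc[symmetric])

lemma act_H: "g \<in> carrier G \<Longrightarrow> g <# H = g <# H" by simp

lemma act_inj: "g \<in> carrier G \<Longrightarrow> inj_on (\<lambda>C. g <# C) (lcosets H)"
  by (metis (no_types, lifting) act_inv inj_onI)

lemma card_img: "g \<in> carrier G \<Longrightarrow> X \<subseteq> lcosets H \<Longrightarrow> card ((\<lambda>C. g <# C) ` X) = card X"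
  by (meson act_inj card_image inj_on_subset)

lemma indep_small: assumes "X \<subseteq> lcosets H" "card X \<le> 2" shows "X \<in> I"
proof (rule ccontr)
  assume "X \<notin> I"
  then have "mdependent (lcosets H) I X" using assms unfolding mdependent_def by blast
  moreover have "finite X" using assms finE finite_subset by blast
  ultimately obtain C where "C \<subseteq> X" "mcircuit (lcosets H) I C" using dep_circuit by blast
  moreover then have "card C \<le> card X" using \<open>finite X\<close> card_mono by blast
  ultimately show False using smp assms(2) unfolding msimple_def by force
qed

definition "S = {card Y | Y. Y \<subseteq> lcosets H \<and> Y \<in> I}"

lemma S_fin: "finite S"
proof -
  have "S \<subseteq> card ` Pow (lcosets H)" unfolding S_def by auto
  then show ?thesis using finE finite_subset by blast
qed

lemma S_Max: "Max S = 3" using rk unfolding mrank_def mrank_of_def S_def by simp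

lemma indep_le3: "X \<in> I \<Longrightarrow> card X \<le> 3"
proof -
  assume "X \<in> I"
  then have "card X \<in> S" unfolding S_def using subE by blast
  then show ?thesis using S_fin S_Max Max_ge by metis
qed

lemma ex3: "\<exists>Y. Y \<in> I \<and> card Y = 3"
proof -
  have "S \<noteq> {}" unfolding S_def using emptyI by blast
  then have "Max S \<in> S" using S_fin Max_in by blast
  then show ?thesis using S_Max unfolding S_def by auto
qed

lemma basis_iff: assumes "card X = 3" shows "mbasis (lcosets H) I X \<longleftrightarrow> X \<in> I"
proof
  assume "X \<in> I"
  moreover have "\<forall>Y\<in>I. X \<subseteq> Y \<longrightarrow> Y = X"
  proof (intro ballI impI)
    fix Y assume Y: "Y \<in> I" "X \<subseteq> Y"
    have "finite Y" using Y subE finE finite_subset by blast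
    then show "Y = X" using card_seteq[OF _ Y(2)] indep_le3[OF Y(1)] assms by (metis)
  qed
  ultimately show "mbasis (lcosets H) I X" unfolding mbasis_def by blast
qed (simp add: mbasis_def)

lemma basis_card: assumes "mbasis (lcosets H) I B" shows "card B = 3"
proof (rule ccontr)
  assume "card B \<noteq> 3"
  have BI: "B \<in> I" using assms mbasis_def by blast
  then have "card B < 3" using indep_le3 \<open>card B \<noteq> 3\<close> by fastforce
  obtain Y where "Y \<in> I" "card Y = 3" using ex3 by blast
  then obtain y where "y \<in> Y - B" "insert y B \<in> I" using aug[OF BI, of Y] \<open>card B < 3\<close> by auto
  then show False using assms unfolding mbasis_def by blast
qed

lemma inv3: assumes "g \<in> carrier G" "card X = 3" "X \<in> I"
  shows "(\<lambda>C. g <# C) ` X \<in> I"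
proof -
  have "mbasis (lcosets H) I X" using basis_iff assms by blast
  then have "mbasis (lcosets H) I ((\<lambda>C. g <# C) ` X)"
    using ginv assms(1) unfolding G_invariant_matroid_def by blast
  then show ?thesis unfolding mbasis_def by blast
qed

lemma inv3_iff: assumes g: "g \<in> carrier G" and X: "X \<subseteq> lcosets H" "card X = 3"
  shows "(\<lambda>C. g <# C) ` X \<in> I \<longleftrightarrow> X \<in> I"
proof
  assume Y: "(\<lambda>C. g <# C) ` X \<in> I"
  have "card ((\<lambda>C. g <# C) ` X) = 3" using card_img g X by simp
  then have "(\<lambda>C. inv g <# C) ` (\<lambda>C. g <# C) ` X \<in> I" using inv3 Y g by simp
  moreover have "(\<lambda>C. inv g <# C) ` (\<lambda>C. g <# C) ` X = X"
    using act_inv g X(1) by (force simp: image_image)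
  ultimately show "X \<in> I" by simp
qed (use inv3 g X in blast)

lemma sim_iff: "(x, y) \<in> coset_sim G H I \<longleftrightarrow>
   x \<in> lcosets H \<and> x \<noteq> H \<and> y \<in> lcosets H \<and> y \<noteq> H \<and> (x = y \<or> {H, x, y} \<notin> I)"
  unfolding coset_sim_def mdependent_def using H_in_E by auto

end
context L
begin

lemma one_H[simp]: "\<one> <# H = H" using H_eq by simp

lemma notH_inv: "a \<in> carrier G \<Longrightarrow> a \<notin> H \<Longrightarrow> inv a \<notin> H"
  by (metis inv_inv subgroup.m_inv_closed subH)

lemma act2: "a \<in> carrier G \<Longrightarrow> b \<in> carrier G \<Longrightarrow> a <# ((inv a \<otimes> b) <# H) = b <# H"
  by (simp add: act m_assoc[symmetric])

lemma img_inv: "a \<in> carrier G \<Longrightarrow> b \<in> carrier G \<Longrightarrow> c \<in> carrier G \<Longrightarrow>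
  (\<lambda>C. inv a <# C) ` {a <# H, b <# H, c <# H} = {H, (inv a \<otimes> b) <# H, (inv a \<otimes> c) <# H}"
  by (simp add: act)

lemma sim_trans: assumes xy: "(x,y) \<in> coset_sim G H I" and yz: "(y,z) \<in> coset_sim G H I"
  shows "(x,z) \<in> coset_sim G H I"
proof -
  have b: "x \<in> lcosets H" "x \<noteq> H" "y \<in> lcosets H" "y \<noteq> H" "z \<in> lcosets H" "z \<noteq> H"
    using xy yz unfolding sim_iff by blast+
  consider "x = y" | "y = z" | "x = z" | "x \<noteq> y \<and> y \<noteq> z \<and> x \<noteq> z" by blast
  then show ?thesis
  proof cases
    case 1 then show ?thesis using yz by simp
  next
    case 2 then show ?thesis using xy by simp
  next
    case 3 then show ?thesis using b unfolding sim_iff by blast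
  next
    case 4
    have d1: "{H,x,y} \<notin> I" using xy 4 unfolding sim_iff by blast
    have d2: "{H,y,z} \<notin> I" using yz 4 unfolding sim_iff by blast
    show ?thesis
    proof (rule ccontr)
      assume "(x,z) \<notin> coset_sim G H I"
      then have i: "{H,x,z} \<in> I" using b 4 unfolding sim_iff by blast
      have "card {H,y} \<le> 2" using b by simp
      moreover have "{H,y} \<subseteq> lcosets H" using b H_in_E by blast
      ultimately have hy: "{H,y} \<in> I" using indep_small by blast
      have "card {H,y} < card {H,x,z}" using b 4 by simp
      then obtain w where w: "w \<in> {H,x,z} - {H,y}" "insert w {H,y} \<in> I"
        using aug[OF hy i] by blast
      have "w = x \<or> w = z" using w(1) by blast
      moreover have "insert x {H,y} = {H,x,y}" by blast
      moreover have "insert z {H,y} = {H,y,z}" by blast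
      ultimately show False using d1 d2 w(2) by metis
    qed
  qed
qed

lemma equiv_sim: "equiv (lcosets H - {H}) (coset_sim G H I)"
proof (rule equivI)
  show "coset_sim G H I \<subseteq> (lcosets H - {H}) \<times> (lcosets H - {H})" unfolding coset_sim_def by blast
  show "refl_on (lcosets H - {H}) (coset_sim G H I)" unfolding refl_on_def coset_sim_def by blast
  have "{H,x,y} = {H,y,x}" for x y :: "'a set" by blast
  then show "sym (coset_sim G H I)" unfolding sym_def sim_iff by metis
  show "trans (coset_sim G H I)" by (rule transI) (rule sim_trans)
qed

lemma nontriv: "card ((lcosets H - {H}) // coset_sim G H I) \<ge> 2"
proof -
  obtain Y where Y: "Y \<in> I" "card Y = 3" using ex3 by blast
  then have YE: "Y \<subseteq> lcosets H" using subE by blast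
  obtain p where "p \<in> Y" using Y by fastforce
  then obtain a where a: "a \<in> carrier G" "p = a <# H" using YE E_iff by blast
  define Y' where "Y' = (\<lambda>C. inv a <# C) ` Y"
  have Y'I: "Y' \<in> I" unfolding Y'_def using inv3 Y a by simp
  have "H \<in> Y'" unfolding Y'_def using \<open>p \<in> Y\<close> a act_inv[OF a(1) H_in_E] by force
  have "card Y' = 3" unfolding Y'_def using card_img YE Y a by simp
  then have "card (Y' - {H}) = 2" using \<open>H \<in> Y'\<close> by (simp add: card_Diff_singleton)
  then obtain x z where xz: "Y' - {H} = {x,z}" "x \<noteq> z" using card_2_iff by metis
  have Y'E: "Y' \<subseteq> lcosets H" using Y'I subE by blast
  have xzE: "x \<in> lcosets H - {H}" "z \<in> lcosets H - {H}" using xz Y'E by auto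
  have "Y' = {H,x,z}" using xz \<open>H \<in> Y'\<close> by auto
  then have nxz: "(x,z) \<notin> coset_sim G H I" using sim_iff xz Y'I by simp
  let ?Q = "(lcosets H - {H}) // coset_sim G H I"
  have q1: "coset_sim G H I `` {x} \<in> ?Q" "coset_sim G H I `` {z} \<in> ?Q"
    using xzE by (simp_all add: quotientI)
  have "z \<in> coset_sim G H I `` {z}" using xzE sim_iff by auto
  moreover have "z \<notin> coset_sim G H I `` {x}" using nxz by auto
  ultimately have ne: "coset_sim G H I `` {x} \<noteq> coset_sim G H I `` {z}" by blast
  have "finite ?Q" using finite_quotient finE equiv_sim equiv_def by (metis finite_Diff)
  then have "card {coset_sim G H I `` {x}, coset_sim G H I `` {z}} \<le> card ?Q"
    using q1 by (intro card_mono) auto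
  then show ?thesis using ne by simp
qed

lemma p2: assumes a: "a \<in> carrier G" and b: "b \<in> carrier G"
  and s: "(a <# H, b <# H) \<in> coset_sim G H I" and ne: "a <# H \<noteq> b <# H"
  shows "(inv a <# H, (inv a \<otimes> b) <# H) \<in> coset_sim G H I"
proof -
  have h: "a <# H \<noteq> H" "b <# H \<noteq> H" "{H, a <# H, b <# H} \<notin> I" using sim_iff[THEN iffD1, OF s] ne by blast+
  have "a \<notin> H" using h lc_H a by simp
  then have n1: "inv a <# H \<noteq> H" using lc_H a notH_inv by simp
  have "inv a \<otimes> b \<notin> H" using lc_eq a b ne by simp
  then have n2: "(inv a \<otimes> b) <# H \<noteq> H" using lc_H a b by simp
  have X: "{H, a <# H, b <# H} \<subseteq> lcosets H" using H_in_E lc_in_E a b by blast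
  have c3: "card {H, a <# H, b <# H} = 3" using h ne by simp
  have img: "(\<lambda>C. inv a <# C) ` {H, a <# H, b <# H} = {inv a <# H, H, (inv a \<otimes> b) <# H}"
    using a b by (simp add: act)
  have "{inv a <# H, H, (inv a \<otimes> b) <# H} \<notin> I"
    using inv3_iff[OF inv_closed[OF a] X c3] h(3) img by simp
  moreover have "{inv a <# H, H, (inv a \<otimes> b) <# H} = {H, inv a <# H, (inv a \<otimes> b) <# H}" by blast
  ultimately have "{H, inv a <# H, (inv a \<otimes> b) <# H} \<notin> I" by simp
  then show ?thesis unfolding sim_iff using n1 n2 lc_in_E a b by simp
qed

lemma p3: assumes h: "h \<in> H" and a: "a \<in> carrier G" "a \<notin> H" and b: "b \<in> carrier G" "b \<notin> H"
  and s: "(a <# H, b <# H) \<in> coset_sim G H I"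
  shows "((h \<otimes> a) <# H, (h \<otimes> b) <# H) \<in> coset_sim G H I"
proof -
  have hc: "h \<in> carrier G" using subgroup.mem_carrier[OF subH h] .
  have "inv h \<in> H" using subgroup.m_inv_closed[OF subH h] .
  have nh: "h \<otimes> x \<notin> H" if "x \<in> carrier G" "x \<notin> H" for x
  proof
    assume "h \<otimes> x \<in> H"
    then have "inv h \<otimes> (h \<otimes> x) \<in> H" using subgroup.m_closed[OF subH \<open>inv h \<in> H\<close>] by blast
    then show False using that hc by (simp add: m_assoc[symmetric])
  qed
  have hH: "h <# H = H" using lc_H hc h by simp
  have "h \<otimes> a \<notin> H" "h \<otimes> b \<notin> H" using nh a b by blast+
  then have ne1: "(h \<otimes> a) <# H \<noteq> H" "(h \<otimes> b) <# H \<noteq> H"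
    using lc_H[of "h \<otimes> a"] lc_H[of "h \<otimes> b"] hc a b by simp_all
  have inE: "(h \<otimes> a) <# H \<in> lcosets H" "(h \<otimes> b) <# H \<in> lcosets H" using lc_in_E hc a b by auto
  show ?thesis
  proof (cases "a <# H = b <# H")
    case True
    then have "h <# (a <# H) = h <# (b <# H)" by simp
    then have "(h \<otimes> a) <# H = (h \<otimes> b) <# H" using act hc a b by simp
    then show ?thesis unfolding sim_iff using ne1 inE by simp
  next
    case False
    have h2: "a <# H \<noteq> H" "b <# H \<noteq> H" "{H, a <# H, b <# H} \<notin> I" using sim_iff[THEN iffD1, OF s] False by blast+
    have X: "{H, a <# H, b <# H} \<subseteq> lcosets H" using H_in_E lc_in_E a b by blast
    have c3: "card {H, a <# H, b <# H} = 3" using h2 False by simp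
    have img: "(\<lambda>C. h <# C) ` {H, a <# H, b <# H} = {H, (h \<otimes> a) <# H, (h \<otimes> b) <# H}"
      using a b hc hH by (simp add: act)
    have "{H, (h \<otimes> a) <# H, (h \<otimes> b) <# H} \<notin> I"
      using inv3_iff[OF hc X c3] h2(3) img by simp
    then show ?thesis unfolding sim_iff using ne1 inE by simp
  qed
qed

lemma key: assumes a: "a \<in> carrier G" and b: "b \<in> carrier G" and c: "c \<in> carrier G"
  and d: "a <# H \<noteq> b <# H" "a <# H \<noteq> c <# H" "b <# H \<noteq> c <# H"
  shows "((inv a \<otimes> b) <# H, (inv a \<otimes> c) <# H) \<in> coset_sim G H I \<longleftrightarrow> {a <# H, b <# H, c <# H} \<notin> I"
proof -
  have ia: "inv a \<in> carrier G" using a by simp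
  have "inv a \<otimes> b \<notin> H" "inv a \<otimes> c \<notin> H" using lc_eq a b c d by simp_all
  then have n: "(inv a \<otimes> b) <# H \<noteq> H" "(inv a \<otimes> c) <# H \<noteq> H"
    using lc_H[of "inv a \<otimes> b"] lc_H[of "inv a \<otimes> c"] ia b c by simp_all
  have nbc: "(inv a \<otimes> b) <# H \<noteq> (inv a \<otimes> c) <# H"
  proof
    assume "(inv a \<otimes> b) <# H = (inv a \<otimes> c) <# H"
    then have "a <# ((inv a \<otimes> b) <# H) = a <# ((inv a \<otimes> c) <# H)" by simp
    then show False using act2 a b c d by simp
  qed
  have inE: "(inv a \<otimes> b) <# H \<in> lcosets H" "(inv a \<otimes> c) <# H \<in> lcosets H"
    using lc_in_E ia b c by simp_all
  have X: "{a <# H, b <# H, c <# H} \<subseteq> lcosets H" using lc_in_E a b c by blast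
  have c3: "card {a <# H, b <# H, c <# H} = 3" using d by simp
  have "((inv a \<otimes> b) <# H, (inv a \<otimes> c) <# H) \<in> coset_sim G H I \<longleftrightarrow>
        {H, (inv a \<otimes> b) <# H, (inv a \<otimes> c) <# H} \<notin> I"
    unfolding sim_iff using n nbc inE by simp
  also have "\<dots> \<longleftrightarrow> {a <# H, b <# H, c <# H} \<notin> I"
    using inv3_iff[OF ia X c3] img_inv[OF a b c] by simp
  finally show ?thesis .
qed

lemma p4: "{B. mbasis (lcosets H) I B} =
         {{a <# H, b <# H, c <# H} | a b c.
            a \<in> carrier G \<and> b \<in> carrier G \<and> c \<in> carrier G \<and>
            a <# H \<noteq> b <# H \<and> a <# H \<noteq> c <# H \<and> b <# H \<noteq> c <# H \<and>
            ((inv a \<otimes> b) <# H, (inv a \<otimes> c) <# H) \<notin> coset_sim G H I}" (is "?L = ?R")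
proof (rule Set.set_eqI, rule iffI)
  fix B assume "B \<in> ?L"
  then have mb: "mbasis (lcosets H) I B" by simp
  then have BI: "B \<in> I" and c3: "card B = 3" using basis_card mbasis_def by blast+
  have BE: "B \<subseteq> lcosets H" using subE BI by blast
  obtain x y z where xyz: "B = {x,y,z}" "x \<noteq> y" "y \<noteq> z" "x \<noteq> z"
    using c3 unfolding card_3_iff by blast
  have "x \<in> lcosets H" "y \<in> lcosets H" "z \<in> lcosets H" using xyz(1) BE by blast+
  then obtain a b c where a: "a \<in> carrier G" "x = a <# H" and b: "b \<in> carrier G" "y = b <# H"
    and c: "c \<in> carrier G" "z = c <# H" unfolding E_iff by blast
  have d: "a <# H \<noteq> b <# H" "a <# H \<noteq> c <# H" "b <# H \<noteq> c <# H" using xyz a b c by simp_all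
  have Beq: "B = {a <# H, b <# H, c <# H}" using xyz a b c by simp
  have ns: "((inv a \<otimes> b) <# H, (inv a \<otimes> c) <# H) \<notin> coset_sim G H I"
    using key[OF a(1) b(1) c(1) d] BI Beq by simp
  show "B \<in> ?R" unfolding Beq
    by (rule CollectI, rule exI[of _ a], rule exI[of _ b], rule exI[of _ c])
       (simp add: a(1) b(1) c(1) d ns)
next
  fix B assume "B \<in> ?R"
  then obtain a b c where B: "B = {a <# H, b <# H, c <# H}" and a: "a \<in> carrier G"
    and b: "b \<in> carrier G" and c: "c \<in> carrier G"
    and d1: "a <# H \<noteq> b <# H" and d2: "a <# H \<noteq> c <# H" and d3: "b <# H \<noteq> c <# H"
    and ns: "((inv a \<otimes> b) <# H, (inv a \<otimes> c) <# H) \<notin> coset_sim G H I"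
    by (elim CollectE exE conjE)
  have "B \<in> I" using key[OF a b c d1 d2 d3] ns B by simp
  moreover have "card B = 3" using B d1 d2 d3 by simp
  ultimately have "mbasis (lcosets H) I B" using basis_iff by blast
  then show "B \<in> ?L" by simp
qed

end

theorem lemma3p6:
  fixes G :: "('a, 'b) monoid_scheme" and H :: "'a set" and I :: "'a set set set"
  assumes "group G" and "finite (carrier G)"
    and "subgroup H G" and "H \<noteq> carrier G"
    and "card (lcosets\<^bsub>G\<^esub> H) \<ge> 3"
    and "matroid (lcosets\<^bsub>G\<^esub> H) I"
    and "msimple (lcosets\<^bsub>G\<^esub> H) I"
    and "mrank (lcosets\<^bsub>G\<^esub> H) I = 3"
    and "G_invariant_matroid G H I"
  shows "(equiv (lcosets\<^bsub>G\<^esub> H - {H}) (coset_sim G H I)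
         \<and> card ((lcosets\<^bsub>G\<^esub> H - {H}) // coset_sim G H I) \<ge> 2)
    \<and> (\<forall>a\<in>carrier G. \<forall>b\<in>carrier G.
           (a <#\<^bsub>G\<^esub> H, b <#\<^bsub>G\<^esub> H) \<in> coset_sim G H I \<and> a <#\<^bsub>G\<^esub> H \<noteq> b <#\<^bsub>G\<^esub> H \<longrightarrow>
           (inv\<^bsub>G\<^esub> a <#\<^bsub>G\<^esub> H, (inv\<^bsub>G\<^esub> a \<otimes>\<^bsub>G\<^esub> b) <#\<^bsub>G\<^esub> H) \<in> coset_sim G H I)
    \<and> (\<forall>h\<in>H. \<forall>a\<in>carrier G - H. \<forall>b\<in>carrier G - H.
           (a <#\<^bsub>G\<^esub> H, b <#\<^bsub>G\<^esub> H) \<in> coset_sim G H I \<longrightarrow>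
           ((h \<otimes>\<^bsub>G\<^esub> a) <#\<^bsub>G\<^esub> H, (h \<otimes>\<^bsub>G\<^esub> b) <#\<^bsub>G\<^esub> H) \<in> coset_sim G H I)
    \<and> ({B. mbasis (lcosets\<^bsub>G\<^esub> H) I B} =
         {{a <#\<^bsub>G\<^esub> H, b <#\<^bsub>G\<^esub> H, c <#\<^bsub>G\<^esub> H} | a b c.
            a \<in> carrier G \<and> b \<in> carrier G \<and> c \<in> carrier G \<and>
            a <#\<^bsub>G\<^esub> H \<noteq> b <#\<^bsub>G\<^esub> H \<and> a <#\<^bsub>G\<^esub> H \<noteq> c <#\<^bsub>G\<^esub> H \<and> b <#\<^bsub>G\<^esub> H \<noteq> c <#\<^bsub>G\<^esub> H \<and>
            ((inv\<^bsub>G\<^esub> a \<otimes>\<^bsub>G\<^esub> b) <#\<^bsub>G\<^esub> H, (inv\<^bsub>G\<^esub> a \<otimes>\<^bsub>G\<^esub> c) <#\<^bsub>G\<^esub> H) \<notin> coset_sim G H I})"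
proof -
  have "L G H I" unfolding L_def L_axioms_def using assms(1,3,6,7,8,9) by blast
  then interpret L G H I .
  have A: "\<forall>a\<in>carrier G. \<forall>b\<in>carrier G.
           (a <#\<^bsub>G\<^esub> H, b <#\<^bsub>G\<^esub> H) \<in> coset_sim G H I \<and> a <#\<^bsub>G\<^esub> H \<noteq> b <#\<^bsub>G\<^esub> H \<longrightarrow>
           (inv\<^bsub>G\<^esub> a <#\<^bsub>G\<^esub> H, (inv\<^bsub>G\<^esub> a \<otimes>\<^bsub>G\<^esub> b) <#\<^bsub>G\<^esub> H) \<in> coset_sim G H I" using p2 by blast
  have B: "\<forall>h\<in>H. \<forall>a\<in>carrier G - H. \<forall>b\<in>carrier G - H.
           (a <#\<^bsub>G\<^esub> H, b <#\<^bsub>G\<^esub> H) \<in> coset_sim G H I \<longrightarrow>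
           ((h \<otimes>\<^bsub>G\<^esub> a) <#\<^bsub>G\<^esub> H, (h \<otimes>\<^bsub>G\<^esub> b) <#\<^bsub>G\<^esub> H) \<in> coset_sim G H I" using p3 by blast
  show ?thesis by (intro conjI equiv_sim nontriv A B p4)
qed

end
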